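(* Let $r>1$ and $s>1$ be coprime integers. Suppose $G$ is a finite group containing elements $x$ and $y$ such that $x^r$ is conjugate to $y^r$ in $G$ and $x^s$ is conjugate to $y^s$ in $G$, but $x^d$ is not conjugate to $y^d$ in $G$ for every proper divisor $d$ of $r$ and every proper divisor $d$ of $s$. Then $|G|$ is divisible by $rs$ and $|G|\neq rs$. If $rs$ is even, then $|G|\neq 2rs$, and if $rs\equiv 2\pmod 4$, then $|G|$ is divisible by $2rs$.
   Context: A proper divisor of a positive integer $n$ is a positive divisor of $n$ strictly less than $n$. *)

theory Defs
  imports "HOL-Algebra.Algebra"
begin

definition conjugate_in :: "('a, 'b) monoid_scheme \<Rightarrow> 'a \<Rightarrow> 'a \<Rightarrow> bool" where
  "conjugate_in G a b \<longleftrightarrow> (\<exists>g\<in>carrier G. inv\<^bsub>G\<^esub> g \<otimes>\<^bsub>G\<^esub> a \<otimes>\<^bsub>G\<^esub> g = b)"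

definition proper_divisors :: "nat \<Rightarrow> nat set" where
  "proper_divisors n = {d. 0 < d \<and> d dvd n \<and> d < n}"

end

theory Submission
  imports Defs
begin

lemma (in group) gi_cancel:
  "g \<in> carrier G \<Longrightarrow> b \<in> carrier G \<Longrightarrow> g \<otimes> (inv g \<otimes> b) = b"
  by (simp add: m_assoc[symmetric])

lemma (in group) ig_cancel:
  "g \<in> carrier G \<Longrightarrow> b \<in> carrier G \<Longrightarrow> inv g \<otimes> (g \<otimes> b) = b"
  by (simp add: m_assoc[symmetric])

lemma (in group) conj_pow:
  assumes "g \<in> carrier G" "a \<in> carrier G"
  shows "inv g \<otimes> a [^] (k::nat) \<otimes> g = (inv g \<otimes> a \<otimes> g) [^] k"
proof (induction k)
  case 0 then show ?case using assms by simp
next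
  case (Suc k)
  have "inv g \<otimes> a [^] Suc k \<otimes> g = (inv g \<otimes> a [^] k \<otimes> g) \<otimes> (inv g \<otimes> a \<otimes> g)"
    using assms by (simp add: m_assoc nat_pow_Suc gi_cancel)
  then show ?case using Suc assms by (simp add: nat_pow_Suc)
qed

lemma (in group) conj_mult:
  assumes "g \<in> carrier G" "a \<in> carrier G" "b \<in> carrier G"
  shows "inv g \<otimes> (a \<otimes> b) \<otimes> g = (inv g \<otimes> a \<otimes> g) \<otimes> (inv g \<otimes> b \<otimes> g)"
  using assms by (simp add: m_assoc gi_cancel)

lemma (in group) conj_gcd:
  assumes x: "x \<in> carrier G" and y: "y \<in> carrier G" and g: "g \<in> carrier G"
    and ox: "ord x = n" and oy: "ord y = n"
    and c: "inv g \<otimes> x [^] r \<otimes> g = y [^] (r::nat)"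
  shows "inv g \<otimes> x [^] (gcd r n) \<otimes> g = y [^] (gcd r n)"
proof (cases "r = 0")
  case True
  have "x [^] n = \<one>" "y [^] n = \<one>" using pow_ord_eq_1[OF x] pow_ord_eq_1[OF y] ox oy by auto
  then show ?thesis using True g by simp
next
  case False
  then obtain u v where uv: "r * u = n * v + gcd r n" using bezout_nat by blast
  have xn: "x [^] n = \<one>" "y [^] n = \<one>" using pow_ord_eq_1[OF x] pow_ord_eq_1[OF y] ox oy by auto
  have px: "x [^] (r * u) = x [^] (gcd r n)"
    using x xn by (simp add: uv nat_pow_mult[symmetric] nat_pow_pow[symmetric])
  have py: "y [^] (r * u) = y [^] (gcd r n)"
    using y xn by (simp add: uv nat_pow_mult[symmetric] nat_pow_pow[symmetric])
  have "inv g \<otimes> x [^] (r * u) \<otimes> g = (inv g \<otimes> x [^] r \<otimes> g) [^] u"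
    using conj_pow[OF g, of "x [^] r" u] x by (simp add: nat_pow_pow)
  then show ?thesis using px py c y by (simp add: nat_pow_pow)
qed

lemma (in group) ord_eq:
  assumes x: "x \<in> carrier G" and y: "y \<in> carrier G" and cop: "coprime r s"
    and c1: "conjugate_in G (x [^] (r::nat)) (y [^] r)"
    and c2: "conjugate_in G (x [^] (s::nat)) (y [^] s)"
  shows "ord y dvd ord x"
proof -
  have d: "ord y dvd t * ord x" if "conjugate_in G (x [^] (t::nat)) (y [^] t)" for t
  proof -
    from that obtain g where g: "g \<in> carrier G" "inv g \<otimes> x [^] t \<otimes> g = y [^] t"
      unfolding conjugate_in_def by blast
    have "y [^] (t * ord x) = (inv g \<otimes> x [^] t \<otimes> g) [^] ord x"
      using g y by (simp add: nat_pow_pow)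
    also have "\<dots> = inv g \<otimes> (x [^] t) [^] ord x \<otimes> g"
      using conj_pow[OF g(1), of "x [^] t" "ord x"] x by simp
    also have "(x [^] t) [^] ord x = \<one>"
      using x by (simp add: nat_pow_pow mult.commute[of t] nat_pow_pow[symmetric])
    finally have "y [^] (t * ord x) = \<one>" using g by simp
    then show ?thesis using y pow_eq_id by (simp add: mult.commute)
  qed
  have "ord y dvd gcd (r * ord x) (s * ord x)"
    using d[OF c1] d[OF c2] by simp
  also have "gcd (r * ord x) (s * ord x) = ord x"
    using cop by (metis gcd_mult_distrib_nat mult.commute coprime_iff_gcd_eq_1 mult_1_right)
  finally show ?thesis .
qed

lemma (in group) conj_sym:
  assumes "a \<in> carrier G" "b \<in> carrier G" "conjugate_in G a b"
  shows "conjugate_in G b a"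
proof -
  from assms obtain g where g: "g \<in> carrier G" "inv g \<otimes> a \<otimes> g = b"
    unfolding conjugate_in_def by blast
  have "inv (inv g) \<otimes> b \<otimes> inv g = g \<otimes> (inv g \<otimes> a \<otimes> g) \<otimes> inv g"
    using g by simp
  also have "\<dots> = a" using g(1) assms(1) by (simp add: m_assoc gi_cancel)
  finally have "inv (inv g) \<otimes> b \<otimes> inv g = a" .
  then show ?thesis unfolding conjugate_in_def using g by blast
qed

lemma (in group) conj_comp:
  assumes "g \<in> carrier G" "h \<in> carrier G" "c \<in> carrier G"
  shows "inv (g \<otimes> h) \<otimes> c \<otimes> (g \<otimes> h) = inv h \<otimes> (inv g \<otimes> c \<otimes> g) \<otimes> h"
  using assms by (simp add: inv_mult_group m_assoc)

lemma (in group) conj_ord: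
  assumes "g \<in> carrier G" "a \<in> carrier G"
  shows "ord (inv g \<otimes> a \<otimes> g) = ord a"
proof -
  have "(inv g \<otimes> a \<otimes> g) [^] k = \<one> \<longleftrightarrow> a [^] k = \<one>" for k :: nat
  proof -
    have "(inv g \<otimes> a \<otimes> g) [^] k = inv g \<otimes> a [^] k \<otimes> g" using conj_pow assms by simp
    moreover have "inv g \<otimes> c \<otimes> g = \<one> \<longleftrightarrow> c = \<one>" if "c \<in> carrier G" for c
      using that assms
      by (metis gi_cancel inv_closed l_inv m_assoc m_closed r_one r_inv)
    ultimately show ?thesis using assms by simp
  qed
  then show ?thesis using assms by (simp add: ord_unique pow_eq_id)
qed

lemma (in group) r_divides:
  assumes x: "x \<in> carrier G" and y: "y \<in> carrier G"
    and ox: "ord x = n" and oy: "ord y = n" and n: "n > 0" and r: "r > 0"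
    and c: "conjugate_in G (x [^] (r::nat)) (y [^] r)"
    and nc: "\<And>d. d \<in> proper_divisors r \<Longrightarrow> \<not> conjugate_in G (x [^] d) (y [^] d)"
  shows "r dvd n"
proof (rule ccontr)
  assume "\<not> r dvd n"
  then have "gcd r n \<noteq> r" by (metis gcd_dvd2)
  moreover have "gcd r n \<le> r" using r by (simp add: gcd_le1_nat)
  ultimately have "gcd r n < r" by linarith
  then have "gcd r n \<in> proper_divisors r"
    using r n unfolding proper_divisors_def by simp
  moreover obtain g where g: "g \<in> carrier G" "inv g \<otimes> x [^] r \<otimes> g = y [^] r"
    using c unfolding conjugate_in_def by blast
  ultimately show False
    using conj_gcd[OF x y g(1) ox oy g(2)] nc g(1) unfolding conjugate_in_def by blast
qed

lemma (in group) cyclic_case: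
  assumes fin: "finite (carrier G)" and x: "x \<in> carrier G" and y: "y \<in> carrier G"
    and ox: "ord x = order G" and cop: "coprime r s" and r: "r \<noteq> 0"
    and c1: "conjugate_in G (x [^] (r::nat)) (y [^] r)"
    and c2: "conjugate_in G (x [^] (s::nat)) (y [^] s)"
  shows "conjugate_in G x y"
proof -
  let ?H = "generate G {x}"
  have H: "?H = {x [^] k | k. k \<in> (UNIV :: nat set)}"
    using generate_pow_on_finite_carrier[OF fin x] .
  have "card ?H = card (carrier G)" using generate_pow_card[OF x] ox by (simp add: order_def)
  moreover have "?H \<subseteq> carrier G" using H x by auto
  ultimately have HG: "?H = carrier G" using fin by (simp add: card_subset_eq)
  have com: "inv g \<otimes> x [^] (t::nat) \<otimes> g = x [^] t" if g: "g \<in> carrier G" for g t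
  proof -
    obtain k where k: "g = x [^] (k::nat)" using g HG H by auto
    have "x [^] t \<otimes> g = g \<otimes> x [^] t" using x k by (simp add: nat_pow_mult add.commute)
    then have "inv g \<otimes> x [^] t \<otimes> g = inv g \<otimes> (g \<otimes> x [^] t)" using g x by (simp add: m_assoc)
    then show ?thesis using g x by (simp add: ig_cancel)
  qed
  have e1: "x [^] r = y [^] r" using c1 com unfolding conjugate_in_def by auto
  have e2: "x [^] s = y [^] s" using c2 com unfolding conjugate_in_def by auto
  obtain u v where uv: "r * u = s * v + gcd r s" using bezout_nat r by blast
  then have uv: "r * u = s * v + 1" using cop by simp
  have "x [^] (r * u) = x [^] (s * v) \<otimes> x" "y [^] (r * u) = y [^] (s * v) \<otimes> y"
    using x y by (simp_all add: uv nat_pow_mult[symmetric])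
  moreover have "x [^] (r * u) = y [^] (r * u)" "x [^] (s * v) = y [^] (s * v)"
    using e1 e2 by (simp_all add: nat_pow_pow[symmetric] x y)
  ultimately have "x = y" using x y by (metis l_cancel nat_pow_closed)
  then show ?thesis unfolding conjugate_in_def using x by (intro bexI[of _ \<one>]) auto
qed

lemma (in group) index2:
  assumes fin: "finite (carrier G)" and H: "subgroup H G" and c: "2 * card H = order G"
    and g: "g \<in> carrier G" "g \<notin> H" and h: "h \<in> carrier G" "h \<notin> H"
  shows "inv g \<otimes> h \<in> H"
proof -
  have sub: "(\<lambda>a. g \<otimes> a) ` H \<subseteq> carrier G - H"
  proof
    fix b assume "b \<in> (\<lambda>a. g \<otimes> a) ` H"
    then obtain a where a: "a \<in> H" "b = g \<otimes> a" by auto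
    have ac: "a \<in> carrier G" using a H subgroup.subset by blast
    have "b \<notin> H"
    proof
      assume "b \<in> H"
      then have "b \<otimes> inv a \<in> H" using a H by (simp add: subgroup.m_closed subgroup.m_inv_closed)
      moreover have "b \<otimes> inv a = g" using a ac g by (simp add: m_assoc)
      ultimately show False using g by simp
    qed
    then show "b \<in> carrier G - H" using a ac g by auto
  qed
  have Hs: "H \<subseteq> carrier G" using H subgroup.subset by blast
  have inj: "inj_on (\<lambda>a. g \<otimes> a) H"
  proof (rule inj_onI)
    fix a b assume "a \<in> H" "b \<in> H" "g \<otimes> a = g \<otimes> b"
    then show "a = b" using g Hs l_cancel by blast
  qed
  have "card ((\<lambda>a. g \<otimes> a) ` H) = card H" using card_image[OF inj] .
  also have "\<dots> = card (carrier G - H)" using c fin Hs by (simp add: card_Diff_subset order_def finite_subset)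
  finally have "(\<lambda>a. g \<otimes> a) ` H = carrier G - H"
    using sub fin by (simp add: card_subset_eq)
  then obtain a where a: "a \<in> H" "h = g \<otimes> a" using h by blast
  then show ?thesis using g Hs a by (simp add: ig_cancel subsetD)
qed

lemma (in group) half_pow:
  assumes x: "x \<in> carrier G" and ox: "ord x = n" and n: "n > 0" and ev: "even n"
    and oj: "ord (x [^] (j::nat)) = n"
  shows "(x [^] j) [^] (n div 2) = x [^] (n div 2)"
proof -
  obtain k where k: "n = 2 * k" using ev by blast
  have xn: "x [^] n = \<one>" using x ox pow_ord_eq_1 by blast
  show ?thesis
  proof (cases "even j")
    case True
    then obtain l where l: "j = 2 * l" by blast
    have "(x [^] j) [^] (n div 2) = (x [^] n) [^] l"
      using x k l by (simp add: nat_pow_pow mult.commute mult.left_commute)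
    also have "\<dots> = \<one>" using xn by simp
    finally have "n dvd n div 2" using oj pow_eq_id x by (metis nat_pow_closed)
    moreover have "n div 2 > 0" "n div 2 < n" using k n by auto
    ultimately have "n \<le> n div 2" using dvd_imp_le by blast
    then show ?thesis using \<open>n div 2 < n\<close> by linarith
  next
    case False
    then obtain l where l: "j = 2 * l + 1" by (metis oddE)
    have "j * (n div 2) = n * l + n div 2" using k l by (simp add: algebra_simps)
    then have "(x [^] j) [^] (n div 2) = (x [^] n) [^] l \<otimes> x [^] (n div 2)"
      using x by (simp add: nat_pow_pow nat_pow_mult[symmetric])
    then show ?thesis using x xn by simp
  qed
qed

lemma (in group) key:
  assumes x: "x \<in> carrier G" and y: "y \<in> carrier G" and g: "g \<in> carrier G"
    and ox: "ord x = n" and oy: "ord y = n" and nq: "n = r * q" and q: "odd q" and r: "r = 2 * r'"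
    and c1: "inv g \<otimes> x [^] r \<otimes> g = y [^] r"
    and c2: "inv g \<otimes> x [^] (n div 2) \<otimes> g = y [^] (n div 2)"
  shows "inv g \<otimes> x [^] r' \<otimes> g = y [^] r'"
proof -
  obtain m where m: "q = 2 * m + 1" using q by (metis oddE)
  have ndiv: "n div 2 = r' * q" using nq r by simp
  have ar: "n div 2 + r * (m + 1) = r' + n" using ndiv nq r m by (simp add: algebra_simps)
  have ex: "z [^] r' = z [^] (n div 2) \<otimes> (z [^] r) [^] (m + 1)" if z: "z \<in> carrier G" "ord z = n" for z
  proof -
    have "z [^] (n div 2) \<otimes> (z [^] r) [^] (m + 1) = z [^] (r' + n)"
      using z ar by (simp add: nat_pow_pow nat_pow_mult add.commute add.left_commute)
    also have "\<dots> = z [^] r'" using z pow_ord_eq_1[OF z(1)] by (simp add: nat_pow_mult[symmetric])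
    finally show ?thesis by simp
  qed
  have "inv g \<otimes> x [^] r' \<otimes> g = (inv g \<otimes> x [^] (n div 2) \<otimes> g) \<otimes> (inv g \<otimes> (x [^] r) [^] (m+1) \<otimes> g)"
    using ex[OF x ox] conj_mult g x by simp
  also have "\<dots> = y [^] (n div 2) \<otimes> (y [^] r) [^] (m + 1)"
    using c1 c2 conj_pow[OF g, of "x [^] r" "m+1"] x by simp
  also have "\<dots> = y [^] r'" using ex[OF y oy] by simp
  finally show ?thesis .
qed

lemma (in group) part3:
  assumes fin: "finite (carrier G)" and x: "x \<in> carrier G" and y: "y \<in> carrier G"
    and ox: "ord x = n" and oy: "ord y = n" and nrs: "n = r * s" and oG: "order G = 2 * n"
    and r: "r = 2 * r'" and s: "odd s"
    and c1: "conjugate_in G (x [^] r) (y [^] r)"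
    and c2: "conjugate_in G (x [^] s) (y [^] s)"
  shows "conjugate_in G (x [^] r') (y [^] r')"
proof -
  let ?H = "generate G {x}"
  have Hp: "?H = {x [^] k | k. k \<in> (UNIV :: nat set)}"
    using generate_pow_on_finite_carrier[OF fin x] .
  have Hsub: "subgroup ?H G" using x by (simp add: generate_is_subgroup)
  have cH: "2 * card ?H = order G" using generate_pow_card[OF x] ox oG by simp
  have Hs: "?H \<subseteq> carrier G" using Hsub subgroup.subset by blast
  have n0: "n > 0" using ox ord_ge_1[OF fin x] by simp
  have ev: "even n" using nrs r by simp
  have xH: "x [^] (k::nat) \<in> ?H" for k using Hp by blast
  have nor: "inv g \<otimes> a \<otimes> g \<in> ?H" if g: "g \<in> carrier G" and a: "a \<in> ?H" for g a
  proof (cases "g \<in> ?H")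
    case True
    then show ?thesis using a Hsub by (simp add: subgroup.m_closed subgroup.m_inv_closed)
  next
    case False
    have ac: "a \<in> carrier G" using a Hs by blast
    have "a \<otimes> g \<notin> ?H"
    proof
      assume "a \<otimes> g \<in> ?H"
      then have "inv a \<otimes> (a \<otimes> g) \<in> ?H" using a Hsub by (simp add: subgroup.m_closed subgroup.m_inv_closed)
      then show False using False ac g by (simp add: ig_cancel)
    qed
    then have "inv g \<otimes> (a \<otimes> g) \<in> ?H" using index2[OF fin Hsub cH g False] ac g by simp
    then show ?thesis using ac g by (simp add: m_assoc)
  qed
  have yH: "y \<in> ?H"
  proof (rule ccontr)
    assume yn: "y \<notin> ?H"
    have "inv y \<notin> ?H" using yn Hsub y by (metis inv_inv subgroup.m_inv_closed)
    then have "inv (inv y) \<otimes> y \<in> ?H" using index2[OF fin Hsub cH _ _ y yn] y by (meson inv_closed)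
    then have yy: "y [^] (2::nat) \<in> ?H" using y by (simp add: numeral_2_eq_2 nat_pow_Suc)
    obtain m where m: "s = 2 * m + 1" using s by (metis oddE)
    have "y [^] s = y [^] (1 + 2 * m)" using m by simp
    also have "\<dots> = y [^] (1::nat) \<otimes> y [^] (2 * m)" by (rule nat_pow_mult[OF y, symmetric])
    also have "\<dots> = y \<otimes> (y [^] (2::nat)) [^] m" using y by (simp add: nat_pow_pow)
    finally have ys: "y [^] s = y \<otimes> (y [^] (2::nat)) [^] m" .
    obtain g where g: "g \<in> carrier G" "inv g \<otimes> x [^] s \<otimes> g = y [^] s"
      using c2 unfolding conjugate_in_def by blast
    have "y [^] s \<in> ?H" using nor[OF g(1) xH[of s]] g(2) by simp
    moreover have "(y [^] (2::nat)) [^] m \<in> ?H"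
    proof -
      obtain k where "y [^] (2::nat) = x [^] (k::nat)" using yy Hp by blast
      then show ?thesis using xH[of "k * m"] x by (simp add: nat_pow_pow)
    qed
    ultimately have "y [^] s \<otimes> inv ((y [^] (2::nat)) [^] m) \<in> ?H"
      using Hsub by (simp add: subgroup.m_closed subgroup.m_inv_closed)
    moreover have "y [^] s \<otimes> inv ((y [^] (2::nat)) [^] m) = y" using ys y by (simp add: m_assoc)
    ultimately show False using yn by simp
  qed
  then obtain j where j: "y = x [^] (j::nat)" using Hp by blast
  have yhalf: "y [^] (n div 2) = x [^] (n div 2)"
    using half_pow[OF x ox n0 ev] j oy by simp
  have central: "inv g \<otimes> x [^] (n div 2) \<otimes> g = x [^] (n div 2)" if g: "g \<in> carrier G" for g
  proof -
    obtain e where e: "inv g \<otimes> x \<otimes> g = x [^] (e::nat)" using nor[OF g, of x] Hp x xH[of 1] by auto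
    have "ord (x [^] e) = n" using conj_ord[OF g x] e ox by simp
    then have "(x [^] e) [^] (n div 2) = x [^] (n div 2)" using half_pow[OF x ox n0 ev] by simp
    then show ?thesis using conj_pow[OF g x] e by simp
  qed
  obtain g where g: "g \<in> carrier G" "inv g \<otimes> x [^] r \<otimes> g = y [^] r"
    using c1 unfolding conjugate_in_def by blast
  have "inv g \<otimes> x [^] r' \<otimes> g = y [^] r'"
    using key[OF x y g(1) ox oy nrs s r g(2)] central[OF g(1)] yhalf by simp
  then show ?thesis unfolding conjugate_in_def using g(1) by blast
qed

lemma (in group) klein:
  assumes a: "a \<in> carrier G" and z: "z \<in> carrier G"
    and aa: "a \<otimes> a = \<one>" and zz: "z \<otimes> z = \<one>" and az: "a \<otimes> z = z \<otimes> a"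
    and a1: "a \<noteq> \<one>" and z1: "z \<noteq> \<one>" and neq: "a \<noteq> z"
  shows "4 dvd order G"
proof -
  let ?K = "{\<one>, a, z, a \<otimes> z}"
  have aa': "a \<otimes> (a \<otimes> c) = c" if "c \<in> carrier G" for c using that a aa by (simp add: m_assoc[symmetric])
  have zz': "z \<otimes> (z \<otimes> c) = c" if "c \<in> carrier G" for c using that z zz by (simp add: m_assoc[symmetric])
  have za': "z \<otimes> (a \<otimes> c) = a \<otimes> (z \<otimes> c)" if "c \<in> carrier G" for c using that a z az by (simp add: m_assoc[symmetric])
  have ia: "inv a = a" using inv_equality[OF aa a a] .
  have iz: "inv z = z" using inv_equality[OF zz z z] .
  have sg: "subgroup ?K G"
  proof (rule subgroupI)
    show "?K \<subseteq> carrier G" using a z by auto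
    show "?K \<noteq> {}" by simp
    show "inv p \<in> ?K" if "p \<in> ?K" for p
      using that a z ia iz az by (auto simp: inv_mult_group)
    show "p \<otimes> q \<in> ?K" if "p \<in> ?K" "q \<in> ?K" for p q
      using that a z az[symmetric] by (auto simp: m_assoc aa' zz' za' aa zz)
  qed
  have d1: "a \<otimes> z \<noteq> \<one>"
  proof
    assume "a \<otimes> z = \<one>"
    then have "inv z = a" using inv_equality[of a z] a z by blast
    then show False using iz neq by simp
  qed
  have d2: "a \<otimes> z \<noteq> a" using z1 a z by (metis r_one r_cancel_one' one_closed l_cancel)
  have d3: "a \<otimes> z \<noteq> z" using a1 a z by (metis l_one one_closed r_cancel)
  have "card ?K = 4" using d1 d2 d3 a1 z1 neq by auto
  then show ?thesis using lagrange[OF sg] by (metis dvd_triv_right)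
qed

lemma (in group) pow_comm:
  assumes "c \<in> carrier G" "w \<in> carrier G" "c \<otimes> w = w \<otimes> c"
  shows "c [^] (j::nat) \<otimes> w = w \<otimes> c [^] j"
proof (induction j)
  case 0 then show ?case using assms by simp
next
  case (Suc j)
  have "c [^] Suc j \<otimes> w = c [^] j \<otimes> (c \<otimes> w)" using assms by (simp add: nat_pow_Suc m_assoc)
  also have "\<dots> = (c [^] j \<otimes> w) \<otimes> c" using assms by (simp add: m_assoc)
  also have "\<dots> = w \<otimes> c [^] Suc j" using Suc assms by (simp add: nat_pow_Suc m_assoc)
  finally show ?case .
qed

lemma (in group) invol_conj:
  assumes fin: "finite (carrier G)" and n4: "\<not> 4 dvd order G"
    and a: "a \<in> carrier G" and b: "b \<in> carrier G" and w: "w \<in> carrier G"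
    and aa: "a \<otimes> a = \<one>" and bb: "b \<otimes> b = \<one>" and a1: "a \<noteq> \<one>" and b1: "b \<noteq> \<one>"
    and aw: "a \<otimes> w = w \<otimes> a" and bw: "b \<otimes> w = w \<otimes> b"
  shows "\<exists>h\<in>carrier G. h \<otimes> w = w \<otimes> h \<and> inv h \<otimes> a \<otimes> h = b"
proof -
  define u where "u = a \<otimes> b"
  have u: "u \<in> carrier G" using a b u_def by simp
  have ia: "inv a = a" using inv_equality[OF aa a a] .
  have ib: "inv b = b" using inv_equality[OF bb b b] .
  have iu: "inv u = b \<otimes> a" using u_def ia ib a b by (simp add: inv_mult_group)
  have aub: "a \<otimes> u = b" using u_def a b aa by (simp add: m_assoc[symmetric])
  have au: "a \<otimes> u = inv u \<otimes> a" using iu aub a b aa by (simp add: m_assoc)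
  have F: "a \<otimes> u [^] (j::nat) = inv (u [^] j) \<otimes> a" for j
  proof (induction j)
    case 0 then show ?case using a by simp
  next
    case (Suc j)
    have "a \<otimes> u [^] Suc j = (a \<otimes> u [^] j) \<otimes> u" using a u by (simp add: nat_pow_Suc m_assoc)
    also have "\<dots> = inv (u [^] j) \<otimes> (a \<otimes> u)" using Suc a u by (simp add: m_assoc)
    also have "\<dots> = inv (u [^] j) \<otimes> (inv u \<otimes> a)" using au by simp
    also have "\<dots> = inv (u \<otimes> u [^] j) \<otimes> a" using u a by (simp add: m_assoc[symmetric] inv_mult_group)
    also have "u \<otimes> u [^] j = u [^] Suc j" by (rule nat_pow_Suc2[OF u, symmetric])
    finally show ?case .
  qed
  have C: "inv (u [^] j) \<otimes> a \<otimes> u [^] j = a \<otimes> u [^] (2 * (j::nat))" for j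
  proof -
    have "inv (u [^] j) \<otimes> a \<otimes> u [^] j = (a \<otimes> u [^] j) \<otimes> u [^] j" using F[of j] by simp
    also have "\<dots> = a \<otimes> u [^] (2 * j)" using a u by (simp add: m_assoc nat_pow_mult mult_2)
    finally show ?thesis .
  qed
  have uw: "u \<otimes> w = w \<otimes> u" using u_def a b w aw bw by (metis m_assoc)
  have k1: "ord u \<ge> 1" using ord_ge_1[OF fin u] .
  show ?thesis
  proof (cases "odd (ord u)")
    case True
    then obtain l where l: "ord u = 2 * l + 1" by (metis oddE)
    have "inv (u [^] (l + 1)) \<otimes> a \<otimes> u [^] (l + 1) = a \<otimes> u [^] (ord u + 1)"
      using C[of "l+1"] l by (simp add: algebra_simps)
    also have "u [^] (ord u + 1) = u" using u by (simp add: nat_pow_mult[symmetric])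
    finally have "inv (u [^] (l + 1)) \<otimes> a \<otimes> u [^] (l + 1) = b" using aub by simp
    moreover have "u [^] (l + 1) \<otimes> w = w \<otimes> u [^] (l + 1)" using pow_comm[OF u w uw] .
    ultimately show ?thesis using u by blast
  next
    case False
    then obtain l where l: "ord u = 2 * l" by blast
    define z where "z = u [^] l"
    have z: "z \<in> carrier G" using u z_def by simp
    have l0: "l > 0" "l < ord u" using l k1 by auto
    have z1: "z \<noteq> \<one>"
    proof
      assume "z = \<one>"
      then have "ord u dvd l" using z_def pow_eq_id u by simp
      then show False using l0 dvd_imp_le by fastforce
    qed
    have zz: "z \<otimes> z = \<one>" using z_def u l pow_ord_eq_1[OF u] by (simp add: nat_pow_mult mult_2[symmetric])
    have iz: "inv z = z" using inv_equality[OF zz z z] .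
    have az: "a \<otimes> z = z \<otimes> a" using F[of l] z_def iz by simp
    show ?thesis
    proof (cases "a = z")
      case True
      have "a \<otimes> u = u \<otimes> a" using pow_comm[OF u u refl, of l] True z_def by simp
      then have "u \<otimes> a = inv u \<otimes> a" using au by simp
      then have "u = inv u" using u a by (simp add: right_cancel)
      then have "u \<otimes> u = \<one>" using u r_inv by metis
      then have "u [^] (2::nat) = \<one>" using u by (simp add: numeral_2_eq_2 nat_pow_Suc)
      then have "ord u dvd 2" using pow_eq_id u by blast
      then have "ord u \<le> 2" using dvd_imp_le by simp
      then have "l = 1" using l l0 by simp
      then have "a = a \<otimes> b" using True z_def u_def a b by simp
      then have "b = \<one>" using a b by simp
      then show ?thesis using b1 by simp
    next
      case False
      have "4 dvd order G" using klein[OF a z aa zz az a1 z1 False] .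
      then show ?thesis using n4 by simp
    qed
  qed
qed

lemma (in group) half_props:
  assumes z: "z \<in> carrier G" and oz: "ord z = n" and n: "n > 0" and ev: "even n"
  shows "z [^] (n div 2) \<otimes> z [^] (n div 2) = \<one>" "z [^] (n div 2) \<noteq> \<one>"
proof -
  have nn: "n div 2 + n div 2 = n" using ev by presburger
  have "z [^] (n div 2) \<otimes> z [^] (n div 2) = z [^] n"
    using z nn by (simp add: nat_pow_mult)
  then show "z [^] (n div 2) \<otimes> z [^] (n div 2) = \<one>" using pow_ord_eq_1[OF z] oz by simp
  show "z [^] (n div 2) \<noteq> \<one>"
  proof
    assume "z [^] (n div 2) = \<one>"
    then have "n dvd n div 2" using pow_eq_id[OF z] oz by simp
    moreover have "n div 2 > 0" "n div 2 < n" using n ev by auto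
    ultimately have "n \<le> n div 2" using dvd_imp_le by blast
    then show False using \<open>n div 2 < n\<close> by linarith
  qed
qed

lemma (in group) part4:
  assumes fin: "finite (carrier G)" and n4: "\<not> 4 dvd order G"
    and x: "x \<in> carrier G" and y: "y \<in> carrier G"
    and ox: "ord x = n" and oy: "ord y = n" and nq: "n = r * q" and q: "odd q" and r: "r = 2 * r'"
    and c1: "conjugate_in G (x [^] r) (y [^] r)"
  shows "conjugate_in G (x [^] r') (y [^] r')"
proof -
  obtain g0 where g0: "g0 \<in> carrier G" "inv g0 \<otimes> x [^] r \<otimes> g0 = y [^] r"
    using c1 unfolding conjugate_in_def by blast
  define x' where "x' = inv g0 \<otimes> x \<otimes> g0"
  have x': "x' \<in> carrier G" using x g0 x'_def by simp
  have ox': "ord x' = n" using conj_ord[OF g0(1) x] ox x'_def by simp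
  have cp: "inv g0 \<otimes> x [^] (k::nat) \<otimes> g0 = x' [^] k" for k using conj_pow[OF g0(1) x] x'_def by simp
  have x'r: "x' [^] r = y [^] r" using cp g0(2) by simp
  have n0: "n > 0" using ox ord_ge_1[OF fin x] by simp
  have ev: "even n" using nq r by simp
  define a where "a = x' [^] (n div 2)"
  define b where "b = y [^] (n div 2)"
  define w where "w = y [^] r"
  have a: "a \<in> carrier G" and b: "b \<in> carrier G" and w: "w \<in> carrier G"
    using x' y a_def b_def w_def by auto
  have aw: "a \<otimes> w = w \<otimes> a" using a_def w_def x'r[symmetric] x' by (simp add: nat_pow_mult add.commute)
  have bw: "b \<otimes> w = w \<otimes> b" using b_def w_def y by (simp add: nat_pow_mult add.commute)
  obtain h where h: "h \<in> carrier G" "h \<otimes> w = w \<otimes> h" "inv h \<otimes> a \<otimes> h = b"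
  proof -
    have ha: "a \<otimes> a = \<one>" "a \<noteq> \<one>" using half_props[OF x' ox' n0 ev] a_def by simp_all
    have hb: "b \<otimes> b = \<one>" "b \<noteq> \<one>" using half_props[OF y oy n0 ev] b_def by simp_all
    show ?thesis using invol_conj[OF fin n4 a b w ha(1) hb(1) ha(2) hb(2) aw bw] that by blast
  qed
  define g where "g = g0 \<otimes> h"
  have g: "g \<in> carrier G" using g0 h g_def by simp
  have e1: "inv g \<otimes> x [^] r \<otimes> g = y [^] r"
  proof -
    have "inv g \<otimes> x [^] r \<otimes> g = inv h \<otimes> w \<otimes> h"
      using conj_comp[OF g0(1) h(1), of "x [^] r"] x g0(2) g_def w_def by simp
    also have "\<dots> = inv h \<otimes> (h \<otimes> w)" using h(1) w by (simp add: m_assoc h(2)[symmetric])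
    also have "\<dots> = w" by (rule ig_cancel[OF h(1) w])
    finally show ?thesis using w_def by simp
  qed
  have e2: "inv g \<otimes> x [^] (n div 2) \<otimes> g = y [^] (n div 2)"
    using conj_comp[OF g0(1) h(1), of "x [^] (n div 2)"] x cp h(3) g_def a_def b_def by simp
  have "inv g \<otimes> x [^] r' \<otimes> g = y [^] r'" using key[OF x y g ox oy nq q r e1 e2] .
  then show ?thesis unfolding conjugate_in_def using g by blast
qed

lemma arith4:
  fixes m N :: nat
  assumes m: "m mod 4 = 2" and d: "m dvd N" and f: "4 dvd N"
  shows "2 * m dvd N"
proof -
  obtain k where k: "N = m * k" using d by blast
  have "m = 2 * (2 * (m div 4) + 1)" using m by presburger
  then obtain a where a: "m = 2 * (2 * a + 1)" by blast
  have "4 dvd 2 * ((2 * a + 1) * k)" using f k a by (simp add: mult.assoc)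
  then have "2 dvd (2 * a + 1) * k" by presburger
  then have "even k" by simp
  then obtain l where "k = 2 * l" by blast
  then show ?thesis using k by simp
qed

lemma half_proper:
  assumes "r = 2 * (r'::nat)" "r > 1"
  shows "r' \<in> proper_divisors r"
  using assms unfolding proper_divisors_def by auto

theorem theorem6p6:
  fixes G (structure) and r s :: nat and x y :: 'a
  assumes "group G" and "finite (carrier G)"
    and "r > 1" and "s > 1" and "coprime r s"
    and "x \<in> carrier G" and "y \<in> carrier G"
    and "conjugate_in G (x [^] r) (y [^] r)"
    and "conjugate_in G (x [^] s) (y [^] s)"
    and "\<And>d. d \<in> proper_divisors r \<union> proper_divisors s \<Longrightarrow>
            \<not> conjugate_in G (x [^] d) (y [^] d)"
  shows "r * s dvd order G \<and> order G \<noteq> r * s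
         \<and> (even (r * s) \<longrightarrow> order G \<noteq> 2 * r * s)
         \<and> ((r * s) mod 4 = 2 \<longrightarrow> 2 * r * s dvd order G)"
proof -
  note grp = assms(1) and fin = assms(2) and r1 = assms(3) and s1 = assms(4) and cop = assms(5)
    and xc = assms(6) and yc = assms(7) and c1 = assms(8) and c2 = assms(9) and nc = assms(10)
  interpret group G by (rule grp)
  define n where "n = ord x"
  have c1': "conjugate_in G (y [^] r) (x [^] r)" using conj_sym c1 xc yc by simp
  have c2': "conjugate_in G (y [^] s) (x [^] s)" using conj_sym c2 xc yc by simp
  have ox: "ord x = n" using n_def by simp
  have oy: "ord y = n"
    using dvd_antisym[OF ord_eq[OF xc yc cop c1 c2] ord_eq[OF yc xc cop c1' c2']] n_def by simp
  have n0: "n > 0" using ord_ge_1[OF fin xc] n_def by simp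
  have ncr: "\<And>d. d \<in> proper_divisors r \<Longrightarrow> \<not> conjugate_in G (x [^] d) (y [^] d)" using nc by blast
  have ncs: "\<And>d. d \<in> proper_divisors s \<Longrightarrow> \<not> conjugate_in G (x [^] d) (y [^] d)" using nc by blast
  have rn: "r dvd n" using r_divides[OF xc yc ox oy n0 _ c1 ncr] r1 by simp
  have sn: "s dvd n" using r_divides[OF xc yc ox oy n0 _ c2 ncs] s1 by simp
  have rsn: "r * s dvd n" using divides_mult[OF rn sn cop] .
  have nG: "n dvd order G" using ord_dvd_group_order[OF xc] n_def by simp
  have notcyc: "n \<noteq> order G"
  proof
    assume "n = order G"
    then have "conjugate_in G x y" using cyclic_case[OF fin xc yc _ cop _ c1 c2] ox r1 by simp
    moreover have "1 \<in> proper_divisors r" using r1 unfolding proper_divisors_def by simp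
    ultimately show False using ncr[of 1] xc yc by simp
  qed
  have P1: "r * s dvd order G" using rsn nG by (rule dvd_trans)
  have P2: "order G \<noteq> r * s"
  proof
    assume "order G = r * s"
    then have "n = order G" using rsn nG by (simp add: dvd_antisym)
    then show False using notcyc by simp
  qed
  have P3: "order G \<noteq> 2 * r * s" if ev: "even (r * s)"
  proof
    assume oG: "order G = 2 * r * s"
    obtain t where t: "n = r * s * t" using rsn by blast
    have rs0: "r * s > 0" using r1 s1 by simp
    have "r * s * t dvd r * s * 2" using nG oG t by (simp add: mult.commute mult.left_commute)
    then have "t dvd 2" using rs0 by simp
    then have "t = 1 \<or> t = 2" using dvd_imp_le[of t 2] by (cases t) (auto simp: le_Suc_eq)
    moreover have "t \<noteq> 2" using notcyc oG t by (auto simp: mult.commute mult.left_commute)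
    ultimately have nrs: "n = r * s" using t by auto
    have oG2: "order G = 2 * n" using oG nrs by simp
    have "even r \<or> even s" using ev by simp
    then show False
    proof
      assume er: "even r"
      then obtain r' where r': "r = 2 * r'" by blast
      have "odd s"
      proof
        assume "even s"
        then have "2 dvd gcd r s" using er by simp
        then show False using cop by (metis coprime_iff_gcd_eq_1 odd_one)
      qed
      then have "conjugate_in G (x [^] r') (y [^] r')" using part3[OF fin xc yc ox oy nrs oG2 r' _ c1 c2] by simp
      then show False using ncr half_proper[OF r' r1] by blast
    next
      assume es: "even s"
      then obtain s' where s': "s = 2 * s'" by blast
      have "odd r"
      proof
        assume "even r"
        then have "2 dvd gcd r s" using es by simp
        then show False using cop by (metis coprime_iff_gcd_eq_1 odd_one)
      qed
      moreover have nsr: "n = s * r" using nrs by simp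
      ultimately have "conjugate_in G (x [^] s') (y [^] s')" using part3[OF fin xc yc ox oy nsr oG2 s' _ c2 c1] by simp
      then show False using ncs half_proper[OF s' s1] by blast
    qed
  qed
  have P4: "2 * r * s dvd order G" if m4: "(r * s) mod 4 = 2"
  proof (rule ccontr)
    assume nd: "\<not> 2 * r * s dvd order G"
    have n4: "\<not> 4 dvd order G" using arith4[OF m4 P1] nd by (auto simp: mult.assoc)
    have n4': "\<not> 4 dvd n" using n4 nG dvd_trans by blast
    have "even (r * s)" using m4 by presburger
    then have "even r \<or> even s" by simp
    then show False
    proof
      assume er: "even r"
      then obtain r' where r': "r = 2 * r'" by blast
      obtain q where q: "n = r * q" using rn by blast
      have "odd q" using n4' q r' by auto
      then have "conjugate_in G (x [^] r') (y [^] r')" using part4[OF fin n4 xc yc ox oy q _ r' c1] by simp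
      then show False using ncr half_proper[OF r' r1] by blast
    next
      assume es: "even s"
      then obtain s' where s': "s = 2 * s'" by blast
      obtain q where q: "n = s * q" using sn by blast
      have "odd q" using n4' q s' by auto
      then have "conjugate_in G (x [^] s') (y [^] s')" using part4[OF fin n4 xc yc ox oy q _ s' c2] by simp
      then show False using ncs half_proper[OF s' s1] by blast
    qed
  qed
  show ?thesis using P1 P2 P3 P4 by blast
qed

end
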